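(* Let $T$ be a caterpillar shuffle tree monomial in the free 2-colored shuffle operad generated by the elements $\gamma_{i,\bar c}$ described below, and fix any admissible coloring of its inputs and output. Then the poset $([T]_{\mathfrak c},\prec)$ of all colored shuffle monomials of the given shape possesses a unique supremum $T^{\max}$, and $T^{\max}$ is characterized by having the maximal possible number of internal edges colored straight.
   Context: Colors are called "straight" (encoded $0$) and "dotted" (encoded $1$). Let $\{\gamma_i\}_{i\in I}$ be a set of shuffle generators (a basis of the generating collection) of a free cyclic operad, $\gamma_i$ of arity $m_i$ (i.e. $m_i+1$ legs). The associated 2-colored shuffle generators are $\gamma_{i,\bar c}$ for $\bar c=(c_0;c_1,\dots,c_{m_i})\in\mathbb F_2^{m_i+1}\setminus\{(0;1,\dots,1),(1;0,\dots,0)\}$, where $c_0$ is the color of the output and $c_j$ the color of the $j$-th input; i.e. a vertex may not have all inputs of one color and the output of the other color (admissibility). For a colored shuffle tree monomial $T$ in these generators, $\mathrm{Shape}(T)$ is the underlying shuffle monomial obtained by forgetting the colors of internal edges (keeping the colors of inputs and output), and $[T]_{\mathfrak c}$ is the set of all colored shuffle monomials $T'$ with $\mathrm{Shape}(T')=\mathrm{Shape}(T)$. The partial order $\prec$ on $[T]_{\mathfrak c}$ is generated by the covering relations $T'\prec T''$ whenever $T''$ is obtained from $T'$ by recoloring a single dotted internal edge as straight. An operadic tree is a caterpillar tree if no vertex has more than one incoming internal edge (so the internal vertices form a path and all leaves attach to it); a shuffle tree monomial is caterpillar if its underlying tree is. *)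

theory Defs
  imports Main
begin

text \<open>Colors: straight (encoded 0) and dotted (encoded 1).\<close>
datatype color = Straight | Dotted

text \<open>Admissibility of a 2-colored vertex: the colored generator
  gamma_{i,c} exists iff c is not (0;1,...,1) and not (1;0,...,0), i.e. the vertex
  does not have all inputs of one color and the output of the other color.\<close>
definition admissible_vertex :: "color \<Rightarrow> color list \<Rightarrow> bool" where
  "admissible_vertex o_c ins \<longleftrightarrow>
     \<not> (o_c = Straight \<and> (\<forall>c\<in>set ins. c = Dotted)) \<and>
     \<not> (o_c = Dotted \<and> (\<forall>c\<in>set ins. c = Straight))"

text \<open>A caterpillar shape with n internal vertices v_0 (root), ..., v_{n-1}
  forming a path; internal edge j (for j < n-1) is the output of v_{j+1}
  plugged into an input of v_j.  The leaves of vertex j carry the fixed colors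
  leaves j, the root output carries the fixed color out.  A colored monomial of
  this shape is given by the colors of the n-1 internal edges, as a list col.\<close>
definition vertex_out :: "color \<Rightarrow> color list \<Rightarrow> nat \<Rightarrow> color" where
  "vertex_out out col j = (if j = 0 then out else col ! (j - 1))"

definition vertex_ins :: "nat \<Rightarrow> (nat \<Rightarrow> color list) \<Rightarrow> color list \<Rightarrow> nat \<Rightarrow> color list" where
  "vertex_ins n leaves col j = leaves j @ (if Suc j < n then [col ! j] else [])"

definition colorings :: "nat \<Rightarrow> (nat \<Rightarrow> color list) \<Rightarrow> color \<Rightarrow> color list set" where
  "colorings n leaves out =
     {col. length col = n - 1 \<and>
           (\<forall>j<n. admissible_vertex (vertex_out out col j) (vertex_ins n leaves col j))}"

definition recolor_step :: "color list \<Rightarrow> color list \<Rightarrow> bool" where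
  "recolor_step c c' \<longleftrightarrow> (\<exists>i<length c. c ! i = Dotted \<and> c' = c[i := Straight])"

definition prec_le :: "color list set \<Rightarrow> (color list \<times> color list) set" where
  "prec_le S = {(a, b). a \<in> S \<and> b \<in> S \<and> recolor_step a b}\<^sup>*"

definition num_straight :: "color list \<Rightarrow> nat" where
  "num_straight col = length (filter (\<lambda>c. c = Straight) col)"

definition is_greatest_in :: "color list set \<Rightarrow> color list \<Rightarrow> bool" where
  "is_greatest_in S t \<longleftrightarrow> t \<in> S \<and> (\<forall>t'\<in>S. (t', t) \<in> prec_le S)"

end

theory Submission
  imports Defs
begin

lemma adm_iff: "admissible_vertex oc ins \<longleftrightarrow>
   (oc = Straight \<longrightarrow> Straight \<in> set ins) \<and> (oc = Dotted \<longrightarrow> Dotted \<in> set ins)"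
  unfolding admissible_vertex_def
  by (cases oc) (auto, (metis color.exhaust)+)

definition cjoin :: "color \<Rightarrow> color \<Rightarrow> color" where
  "cjoin x y = (if x = Straight then Straight else y)"

definition ljoin :: "color list \<Rightarrow> color list \<Rightarrow> color list" where
  "ljoin a b = map (\<lambda>(x,y). cjoin x y) (zip a b)"

definition cle :: "color \<Rightarrow> color \<Rightarrow> bool" where
  "cle x y \<longleftrightarrow> (x = Straight \<longrightarrow> y = Straight)"

lemma vert_join0:
  assumes "admissible_vertex o1 L" "admissible_vertex o2 L"
  shows "admissible_vertex (cjoin o1 o2) L"
  using assms unfolding adm_iff cjoin_def by auto

lemma vert_join1:
  assumes "admissible_vertex o1 (L @ [y1])" "admissible_vertex o2 (L @ [y2])"
  shows "admissible_vertex (cjoin o1 o2) (L @ [cjoin y1 y2])"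
  using assms unfolding adm_iff cjoin_def by (cases o1; cases o2; cases y1; cases y2; auto)

lemma join_mem:
  assumes "a \<in> colorings n leaves out" "b \<in> colorings n leaves out"
  shows "ljoin a b \<in> colorings n leaves out"
proof -
  have la: "length a = n - 1" and lb: "length b = n - 1" using assms by (auto simp: colorings_def)
  have lj: "length (ljoin a b) = n - 1" using la lb by (simp add: ljoin_def)
  have nth: "\<And>k. k < n - 1 \<Longrightarrow> ljoin a b ! k = cjoin (a!k) (b!k)"
    using la lb by (simp add: ljoin_def)
  show ?thesis unfolding colorings_def
  proof (intro CollectI conjI allI impI)
    show "length (ljoin a b) = n - 1" by (rule lj)
    fix j assume j: "j < n"
    have A: "admissible_vertex (vertex_out out a j) (vertex_ins n leaves a j)"
      and B: "admissible_vertex (vertex_out out b j) (vertex_ins n leaves b j)"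
      using assms j by (auto simp: colorings_def)
    have vo: "vertex_out out (ljoin a b) j = cjoin (vertex_out out a j) (vertex_out out b j)"
      using j nth by (auto simp: vertex_out_def cjoin_def)
    show "admissible_vertex (vertex_out out (ljoin a b) j) (vertex_ins n leaves (ljoin a b) j)"
    proof (cases "Suc j < n")
      case True
      then have "vertex_ins n leaves (ljoin a b) j = leaves j @ [cjoin (a!j) (b!j)]"
        using nth by (simp add: vertex_ins_def)
      then show ?thesis using vert_join1[of "vertex_out out a j" "leaves j" "a!j"
            "vertex_out out b j" "b!j"] A B True vo by (simp add: vertex_ins_def)
    next
      case False
      then show ?thesis using vert_join0 A B vo by (simp add: vertex_ins_def)
    qed
  qed
qed

lemma num_straight_Cons: "num_straight (x # xs) = (if x = Straight then 1 else 0) + num_straight xs"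
  by (simp add: num_straight_def)

lemma le_num: "list_all2 cle a b \<Longrightarrow> num_straight a \<le> num_straight b"
  by (induction rule: list_all2_induct) (auto simp: num_straight_Cons cle_def)

lemma le_num_strict: "list_all2 cle a b \<Longrightarrow> a \<noteq> b \<Longrightarrow> num_straight a < num_straight b"
proof (induction rule: list_all2_induct)
  case Nil then show ?case by simp
next
  case (Cons x xs y ys)
  then show ?case using le_num[OF Cons(2)]
    by (cases x; cases y; auto simp: num_straight_Cons cle_def)
qed

lemma le_antisym: "list_all2 cle a b \<Longrightarrow> list_all2 cle b a \<Longrightarrow> a = b"
proof (induction rule: list_all2_induct)
  case Nil then show ?case by simp
next
  case (Cons x xs y ys)
  then show ?case by (cases x; cases y; auto simp: cle_def)
qed

lemma le_refl: "list_all2 cle a a"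
  by (induction a) (auto simp: cle_def)

lemma le_trans: "list_all2 cle a b \<Longrightarrow> list_all2 cle b c \<Longrightarrow> list_all2 cle a c"
  unfolding list_all2_conv_all_nth cle_def by auto

lemma le_join: "length a = length b \<Longrightarrow> list_all2 cle a (ljoin a b) \<and> list_all2 cle b (ljoin a b)"
  unfolding list_all2_conv_all_nth cle_def ljoin_def cjoin_def by auto

lemma step_le: "recolor_step a b \<Longrightarrow> list_all2 cle a b"
  unfolding recolor_step_def list_all2_conv_all_nth cle_def
  by (auto simp: nth_list_update)

lemma prec_le_le: "(a, b) \<in> prec_le S \<Longrightarrow> list_all2 cle a b"
  unfolding prec_le_def
proof (induction rule: rtrancl_induct)
  case base then show ?case by (rule le_refl)
next
  case (step y z) then show ?case using step_le le_trans by blast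
qed

lemma finite_col: "finite (UNIV :: color set)"
proof -
  have "(UNIV :: color set) = {Straight, Dotted}" using color.exhaust by blast
  then show ?thesis by (metis finite.emptyI finite.insertI)
qed

lemma finite_colorings: "finite (colorings n leaves out)"
proof -
  have "colorings n leaves out \<subseteq> {xs. set xs \<subseteq> UNIV \<and> length xs = n - 1}"
    by (auto simp: colorings_def)
  moreover have "finite {xs. set xs \<subseteq> (UNIV :: color set) \<and> length xs = n - 1}"
    by (rule finite_lists_length_eq[OF finite_col])
  ultimately show ?thesis by (rule finite_subset)
qed


lemma bad_flip:
  assumes aS: "a \<in> colorings n leaves out" and bS: "b \<in> colorings n leaves out"
    and Pi: "i < length a" "a!i = Dotted" "b!i = Straight"
    and nf: "a[i := Straight] \<notin> colorings n leaves out"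
  shows "(Suc i < length a \<and> a!(Suc i) = Dotted \<and> b!(Suc i) = Straight \<and> Straight \<notin> set (leaves (Suc i)))
       \<or> (i \<ge> 1 \<and> a!(i-1) = Dotted \<and> b!(i-1) = Straight \<and> Dotted \<notin> set (leaves i))"
proof -
  let ?c = "a[i := Straight]"
  have la: "length a = n - 1" and lb: "length b = n - 1" using aS bS by (auto simp: colorings_def)
  have Aa: "\<And>j. j < n \<Longrightarrow> admissible_vertex (vertex_out out a j) (vertex_ins n leaves a j)"
    using aS by (auto simp: colorings_def)
  have Ab: "\<And>j. j < n \<Longrightarrow> admissible_vertex (vertex_out out b j) (vertex_ins n leaves b j)"
    using bS by (auto simp: colorings_def)
  obtain j where j: "j < n" and nadm: "\<not> admissible_vertex (vertex_out out ?c j) (vertex_ins n leaves ?c j)"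
    using nf la by (auto simp: colorings_def)
  consider "j = i" | "j = Suc i" | "j \<noteq> i" "j \<noteq> Suc i" by blast
  then show ?thesis
  proof cases
    case 1
    have si: "Suc i < n" using Pi la by simp
    have ins: "vertex_ins n leaves ?c j = leaves i @ [Straight]"
      using 1 si Pi by (simp add: vertex_ins_def)
    have insb: "vertex_ins n leaves b j = leaves i @ [Straight]"
      using 1 si Pi by (simp add: vertex_ins_def)
    have voc: "vertex_out out ?c j = vertex_out out a j"
      using 1 by (simp add: vertex_out_def)
    have "vertex_out out a j = Dotted" and nd: "Dotted \<notin> set (leaves i)"
      using nadm ins voc unfolding adm_iff by (cases "vertex_out out a j"; auto)+
    moreover have "vertex_out out b j = Straight"
      using Ab[OF j] insb nd unfolding adm_iff by (cases "vertex_out out b j"; auto)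
    ultimately show ?thesis using 1 nd by (auto simp: vertex_out_def split: if_splits)
  next
    case 2
    have voc: "vertex_out out ?c j = Straight" using 2 Pi by (simp add: vertex_out_def)
    have vob: "vertex_out out b j = Straight" using 2 Pi by (simp add: vertex_out_def)
    have insc: "vertex_ins n leaves ?c j = vertex_ins n leaves a j"
      using 2 by (simp add: vertex_ins_def)
    have ns: "Straight \<notin> set (vertex_ins n leaves a j)"
      using nadm voc insc unfolding adm_iff by auto
    have sb: "Straight \<in> set (vertex_ins n leaves b j)"
      using Ab[OF j] vob unfolding adm_iff by auto
    have "Suc j < n" using ns sb by (auto simp: vertex_ins_def split: if_splits)
    then show ?thesis using ns sb 2 la
      by (cases "a ! Suc i"; auto simp: vertex_ins_def)
  next
    case 3
    have "vertex_out out ?c j = vertex_out out a j"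
      using 3 by (cases j) (auto simp: vertex_out_def)
    moreover have "vertex_ins n leaves ?c j = vertex_ins n leaves a j"
      using 3 by (simp add: vertex_ins_def)
    ultimately show ?thesis using Aa[OF j] nadm by simp
  qed
qed

lemma find_flip:
  assumes aS: "a \<in> colorings n leaves out" and bS: "b \<in> colorings n leaves out"
    and ne: "\<forall>j<n. leaves j \<noteq> []"
    and le: "list_all2 cle a b" and neq: "a \<noteq> b"
  shows "\<exists>i<length a. a!i = Dotted \<and> b!i = Straight \<and> a[i := Straight] \<in> colorings n leaves out"
proof -
  define P where "P i \<longleftrightarrow> i < length a \<and> a!i = Dotted \<and> b!i = Straight" for i
  have la: "length a = n - 1" using aS by (auto simp: colorings_def)
  have claim: "\<And>k. P k \<Longrightarrow> \<not> (P (Suc k) \<and> Straight \<notin> set (leaves (Suc k))) \<Longrightarrow>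
      \<exists>i. P i \<and> a[i := Straight] \<in> colorings n leaves out"
  proof -
    fix k show "P k \<Longrightarrow> \<not> (P (Suc k) \<and> Straight \<notin> set (leaves (Suc k))) \<Longrightarrow>
      \<exists>i. P i \<and> a[i := Straight] \<in> colorings n leaves out"
    proof (induction k)
      case 0
      then show ?case using bad_flip[OF aS bS, of 0] unfolding P_def by auto
    next
      case (Suc k)
      show ?case
      proof (cases "a[Suc k := Straight] \<in> colorings n leaves out")
        case True then show ?thesis using Suc.prems by blast
      next
        case False
        then have h: "P k" "Dotted \<notin> set (leaves (Suc k))"
          using bad_flip[OF aS bS, of "Suc k"] Suc.prems unfolding P_def by auto
        have "Suc k < n" using Suc.prems la unfolding P_def by auto
        then have "leaves (Suc k) \<noteq> []" using ne by auto
        then have "Straight \<in> set (leaves (Suc k))" using h(2)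
          by (metis color.exhaust list.set_intros(1) neq_Nil_conv)
        then show ?thesis using Suc.IH h(1) by blast
      qed
    qed
  qed
  have lb: "length a = length b" using le list_all2_lengthD by blast
  have "\<exists>i. P i"
  proof (rule ccontr)
    assume "\<not> (\<exists>i. P i)"
    then have "list_all2 cle b a" using le lb unfolding P_def list_all2_conv_all_nth cle_def
      by (metis color.exhaust)
    then show False using le_antisym le neq by blast
  qed
  then have fin: "finite (Collect P)" "Collect P \<noteq> {}" unfolding P_def by auto
  define k where "k = Max (Collect P)"
  have Pk: "P k" using fin Max_in k_def by auto
  have "\<not> P (Suc k)" using fin k_def Max_ge by (metis Suc_n_not_le_n mem_Collect_eq)
  then obtain i where "P i" "a[i := Straight] \<in> colorings n leaves out" using claim Pk by blast
  then show ?thesis unfolding P_def by blast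
qed


lemma reach:
  assumes bS: "b \<in> colorings n leaves out" and ne: "\<forall>j<n. leaves j \<noteq> []"
  shows "a \<in> colorings n leaves out \<Longrightarrow> list_all2 cle a b \<Longrightarrow> (a, b) \<in> prec_le (colorings n leaves out)"
proof (induction "num_straight b - num_straight a" arbitrary: a rule: less_induct)
  case less
  show ?case
  proof (cases "a = b")
    case True then show ?thesis by (simp add: prec_le_def)
  next
    case False
    obtain i where i: "i < length a" "a!i = Dotted" "b!i = Straight"
      and cS: "a[i := Straight] \<in> colorings n leaves out"
      using find_flip[OF less.prems(1) bS ne less.prems(2) False] by blast
    let ?c = "a[i := Straight]"
    have st: "recolor_step a ?c" using i unfolding recolor_step_def by blast
    have lc: "list_all2 cle ?c b" using less.prems(2) i
      unfolding list_all2_conv_all_nth cle_def by (auto simp: nth_list_update)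
    have "list_all2 cle a ?c" by (rule step_le[OF st])
    moreover have "a \<noteq> ?c" using i by (metis color.distinct(1) nth_list_update_eq)
    ultimately have "num_straight a < num_straight ?c" by (rule le_num_strict)
    moreover have "num_straight ?c \<le> num_straight b" by (rule le_num[OF lc])
    ultimately have "(?c, b) \<in> prec_le (colorings n leaves out)"
      using less.hyps[of ?c] cS lc by simp
    moreover have "(a, ?c) \<in> {(a, b). a \<in> colorings n leaves out \<and> b \<in> colorings n leaves out \<and> recolor_step a b}"
      using less.prems(1) cS st by blast
    ultimately show ?thesis unfolding prec_le_def by (rule converse_rtrancl_into_rtrancl[rotated])
  qed
qed

theorem lemma3p7:
  fixes n :: nat and leaves :: "nat \<Rightarrow> color list" and out :: color
  assumes "n \<ge> 1"
    and "\<forall>j<n. length (leaves j) + (if Suc j < n then 1 else 0) \<ge> 2"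
    and "colorings n leaves out \<noteq> {}"
  shows "\<exists>tmax. is_greatest_in (colorings n leaves out) tmax
           \<and> (\<forall>t. is_greatest_in (colorings n leaves out) t \<longrightarrow> t = tmax)
           \<and> (\<forall>t\<in>colorings n leaves out. num_straight t \<le> num_straight tmax)
           \<and> (\<forall>t\<in>colorings n leaves out. num_straight t = num_straight tmax \<longrightarrow> t = tmax)"
proof -
  let ?S = "colorings n leaves out"
  have ne: "\<forall>j<n. leaves j \<noteq> []"
  proof (intro allI impI)
    fix j assume "j < n"
    then have "length (leaves j) + (if Suc j < n then 1 else 0) \<ge> 2" using assms(2) by blast
    then show "leaves j \<noteq> []" by (cases "Suc j < n") auto
  qed
  obtain tmax where tS: "tmax \<in> ?S" and tmx: "\<forall>t\<in>?S. num_straight t \<le> num_straight tmax"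
  proof -
    have f: "finite (num_straight ` ?S)" "num_straight ` ?S \<noteq> {}"
      using finite_colorings assms(3) by auto
    then obtain t where "t \<in> ?S" "num_straight t = Max (num_straight ` ?S)"
      using Max_in by (metis imageE)
    moreover have "\<forall>t'\<in>?S. num_straight t' \<le> Max (num_straight ` ?S)" using f by simp
    ultimately show ?thesis using that by metis
  qed
  have above: "list_all2 cle t tmax" if tS': "t \<in> ?S" for t
  proof -
    have len: "length t = length tmax" using tS tS' by (auto simp: colorings_def)
    have jS: "ljoin t tmax \<in> ?S" using join_mem[OF tS' tS] .
    have l1: "list_all2 cle tmax (ljoin t tmax)" and l2: "list_all2 cle t (ljoin t tmax)"
      using le_join[OF len] by auto
    have "ljoin t tmax = tmax"
    proof (rule ccontr)
      assume "ljoin t tmax \<noteq> tmax"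
      then have "num_straight tmax < num_straight (ljoin t tmax)" using le_num_strict l1 by metis
      then show False using tmx jS by fastforce
    qed
    then show ?thesis using l2 by simp
  qed
  have grt: "is_greatest_in ?S tmax"
    unfolding is_greatest_in_def using tS above reach[OF tS ne] by blast
  show ?thesis
  proof (intro exI conjI ballI allI impI)
    show "is_greatest_in ?S tmax" by (rule grt)
  next
    fix t assume "is_greatest_in ?S t"
    then have "t \<in> ?S" "(tmax, t) \<in> prec_le ?S" using tS unfolding is_greatest_in_def by auto
    then show "t = tmax" using above prec_le_le le_antisym by metis
  next
    fix t assume "t \<in> ?S" then show "num_straight t \<le> num_straight tmax" using tmx by blast
  next
    fix t assume "t \<in> ?S" "num_straight t = num_straight tmax"
    then show "t = tmax" using above le_num_strict by (metis less_irrefl)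
  qed
qed

end
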